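(* Consider the linear model $Y=A\alpha+B\beta+\varepsilon$ with $\mathbb{E}(\varepsilon)=0$, $\mathrm{Var}(\varepsilon)=\sigma^2I$, and let $K$ be a matrix with as many rows as $\alpha$ has entries. Then the information matrix $C[K'\alpha]$ for $K'\alpha$ satisfies $$C[K'\alpha]\le (K'K)^+K'\,C[\alpha]\,K(K'K)^+$$ in the Loewner order, with equality if and only if $C[\alpha]$ commutes with $\mathrm{pr}_{(K)}$.
   Context: $X^+$ denotes the Moore–Penrose inverse; $\mathrm{pr}_{(X)}=X(X'X)^+X'$ is the orthogonal projection onto the column space of $X$, and $\mathrm{pr}^\perp_{(X)}=I-\mathrm{pr}_{(X)}$. For symmetric $M,N$, $M\le N$ means $N-M$ is nonnegative definite. In a model $\mathbb{E}(Y)=X_1\theta_1+X_2\theta_2$, the information matrix for $\theta_1$ is $X_1'\mathrm{pr}^\perp_{(X_2)}X_1$; thus $C[\alpha]=A'\mathrm{pr}^\perp_{(B)}A$, and $C[K'\alpha]$ is the information matrix for $\theta_1=K'\alpha$ in the reparametrization $\mathbb{E}(Y)=AK(K'K)^+\,(K'\alpha)+AM\,(M\alpha)+B\beta$ with $M=I-K(K'K)^+K'$, i.e. $C[K'\alpha]=X_1'\mathrm{pr}^\perp_{(X_2)}X_1$ with $X_1=AK(K'K)^+$ and $X_2=(AM\mid B)$. *)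

theory Defs
  imports "HOL-Analysis.Analysis"
begin

text \<open>Moore--Penrose inverse, characterised by the four Penrose conditions
  (it exists and is unique for every real matrix).\<close>
definition mp_inverse :: "real^'m^'n \<Rightarrow> real^'n^'m" where
  "mp_inverse X = (THE G. X ** G ** X = X \<and> G ** X ** G = G \<and>
       transpose (X ** G) = X ** G \<and> transpose (G ** X) = G ** X)"

definition proj :: "real^'m^'n \<Rightarrow> real^'n^'n" where
  "proj X = X ** mp_inverse (transpose X ** X) ** transpose X"

definition proj_perp :: "real^'m^'n \<Rightarrow> real^'n^'n" where
  "proj_perp X = mat 1 - proj X"

definition nonneg_def :: "real^'n^'n \<Rightarrow> bool" where
  "nonneg_def M \<longleftrightarrow> (\<forall>x. 0 \<le> x \<bullet> (M *v x))"

definition loewner_le :: "real^'n^'n \<Rightarrow> real^'n^'n \<Rightarrow> bool" where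
  "loewner_le M N \<longleftrightarrow> nonneg_def (N - M)"

definition hcat :: "real^'a^'n \<Rightarrow> real^'b^'n \<Rightarrow> real^('a + 'b)^'n" where
  "hcat X Y = (\<chi> i j. case j of Inl a \<Rightarrow> X $ i $ a | Inr b \<Rightarrow> Y $ i $ b)"

text \<open>Information matrix for theta_1 in E(Y) = X1 theta_1 + X2 theta_2.\<close>
definition info_mat :: "real^'a^'n \<Rightarrow> real^'b^'n \<Rightarrow> real^'a^'a" where
  "info_mat X1 X2 = transpose X1 ** proj_perp X2 ** X1"

definition C_alpha :: "real^'p^'n \<Rightarrow> real^'q^'n \<Rightarrow> real^'p^'p" where
  "C_alpha A B = info_mat A B"

text \<open>C[K' alpha] via the reparametrisation
  E(Y) = A K (K'K)^+ (K' alpha) + A M (M alpha) + B beta, M = I - K(K'K)^+K'.\<close>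
definition C_Kalpha :: "real^'p^'n \<Rightarrow> real^'q^'n \<Rightarrow> real^'k^'p \<Rightarrow> real^'k^'k" where
  "C_Kalpha A B K =
     (let G = mp_inverse (transpose K ** K);
          M = mat 1 - K ** G ** transpose K
      in info_mat (A ** K ** G) (hcat (A ** M) B))"

end

theory Submission
  imports Defs
begin

lemma transpose_eq_from_inner:
  fixes A :: "real^'k^'k"
  assumes "\<And>x y. x \<bullet> (A *v y) = (A *v x) \<bullet> y"
  shows "transpose A = A"
proof -
  have "transpose A *v x = A *v x" for x
  proof -
    have "\<forall>y. (transpose A *v x - A *v x) \<bullet> y = 0"
      using assms by (simp add: inner_diff_left dot_lmul_matrix)
    then show ?thesis
      by (metis eq_iff_diff_eq_0 inner_eq_zero_iff)
  qed
  then show ?thesis by (simp add: matrix_eq)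
qed

lemma proj_exists:
  fixes W :: "(real^'k) set"
  assumes "subspace W"
  shows "\<exists>P::real^'k^'k. transpose P = P \<and> (\<forall>x. P *v x \<in> W) \<and> (\<forall>x\<in>W. P *v x = x)"
proof -
  obtain B where B: "B \<subseteq> W" "pairwise orthogonal B" "\<And>x. x\<in>B \<Longrightarrow> norm x = 1"
    "independent B" "span B = W"
    using orthonormal_basis_subspace[OF assms] by metis
  have fin: "finite B" using B(4) independent_imp_finite by blast
  define f where "f x = (\<Sum>b\<in>B. (b \<bullet> x) *\<^sub>R b)" for x :: "real^'k"
  have lin: "linear f"
  proof -
    have "linear (\<lambda>x. (b \<bullet> x) *\<^sub>R b)" for b :: "real^'k"
      by (rule linearI) (simp_all add: inner_add_right scaleR_add_left)
    then show ?thesis unfolding f_def by (intro linear_compose_sum) blast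
  qed
  define P where "P = matrix f"
  have Pf0: "(\<lambda>x. matrix f *v x) = f" by (rule matrix_vector_mul(2)[OF lin])
  have Pf: "P *v x = f x" for x
    unfolding P_def by (rule fun_cong[OF Pf0, of x, simplified])
  have inW: "f x \<in> W" for x
  proof -
    have "f x \<in> span B" unfolding f_def by (rule span_sum, rule span_mul, rule span_base, assumption)
    then show ?thesis using B(5) by simp
  qed
  have bb: "b \<bullet> b' = (if b = b' then 1 else 0)" if "b \<in> B" "b' \<in> B" for b b'
    using B(2,3) that by (auto simp: pairwise_def orthogonal_def norm_eq_1)
  have bf: "b \<bullet> f x = b \<bullet> x" if "b \<in> B" for b x
  proof -
    have "b \<bullet> f x = (\<Sum>b'\<in>B. (b' \<bullet> x) * (b \<bullet> b'))"
      by (simp add: f_def inner_sum_right)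
    also have "\<dots> = (\<Sum>b'\<in>B. if b = b' then b' \<bullet> x else 0)"
      by (rule sum.cong) (auto simp: bb that)
    also have "\<dots> = b \<bullet> x" using fin that by simp
    finally show ?thesis .
  qed
  have bf': "f x \<bullet> b = x \<bullet> b" if "b \<in> B" for b x
    using bf[OF that, of x] by (simp add: inner_commute)
  have fixW: "f x = x" if "x \<in> W" for x
  proof -
    have d: "x - f x \<in> span B" using that inW[of x] B(5) span_diff[of x B "f x"]
      by simp
    have "orthogonal (x - f x) (x - f x)"
      by (rule orthogonal_to_span[OF d]) (simp add: orthogonal_def inner_diff_left bf')
    then show ?thesis by (simp add: orthogonal_def)
  qed
  have sym: "x \<bullet> f y = f x \<bullet> y" for x y
    by (simp add: f_def inner_sum_right inner_sum_left mult.commute inner_commute)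
  have "transpose P = P"
    by (rule transpose_eq_from_inner) (simp add: Pf sym)
  then show ?thesis using Pf inW fixW by auto
qed

lemma mm_sub_ldistrib: "(A::real^'n^'m) ** (B - C) = A ** B - A ** C"
  by (simp add: matrix_matrix_mult_def vec_eq_iff algebra_simps sum_subtractf)
lemma mm_sub_rdistrib: "((B::real^'n^'m) - C) ** A = B ** A - C ** A"
  by (simp add: matrix_matrix_mult_def vec_eq_iff algebra_simps sum_subtractf)
lemma mm_add_rdistrib: "((B::real^'n^'m) + C) ** A = B ** A + C ** A"
  by (simp add: matrix_matrix_mult_def vec_eq_iff algebra_simps sum.distrib)
lemma transpose_sub: "transpose ((A::real^'n^'m) - B) = transpose A - transpose B"
  by (simp add: transpose_def vec_eq_iff)
lemma transpose_add: "transpose ((A::real^'n^'m) + B) = transpose A + transpose B"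
  by (simp add: transpose_def vec_eq_iff)
lemma transpose_zero: "transpose (0::real^'n^'m) = 0"
  by (simp add: transpose_def vec_eq_iff)

lemma sym_inner:
  fixes P :: "real^'k^'k"
  assumes "transpose P = P"
  shows "u \<bullet> (P *v w) = (P *v u) \<bullet> w"
proof -
  have "u \<bullet> (P *v w) = (u v* P) \<bullet> w" by (simp add: dot_lmul_matrix)
  also have "u v* P = transpose P *v u" by simp
  finally show ?thesis using assms by simp
qed

lemma inner_transpose: "(transpose (X::real^'m^'n) *v y) \<bullet> x = y \<bullet> (X *v x)"
  by (simp add: dot_lmul_matrix)

lemma mp_exists:
  fixes X :: "real^'m^'n"
  shows "\<exists>G. X ** G ** X = X \<and> G ** X ** G = G \<and> transpose (X ** G) = X ** G
              \<and> transpose (G ** X) = G ** X"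
proof -
  define V where "V = range (\<lambda>y. transpose X *v y)"
  define R where "R = range (\<lambda>x. X *v x)"
  have sV: "subspace V" unfolding V_def
    by (rule linear_subspace_image) (auto simp: subspace_UNIV)
  have sR: "subspace R" unfolding R_def
    by (rule linear_subspace_image) (auto simp: subspace_UNIV)
  obtain PV where PV: "transpose PV = PV" "\<And>x. PV *v x \<in> V" "\<And>x. x\<in>V \<Longrightarrow> PV *v x = x"
    using proj_exists[OF sV] by blast
  obtain PR where PR: "transpose PR = PR" "\<And>x. PR *v x \<in> R" "\<And>x. x\<in>R \<Longrightarrow> PR *v x = x"
    using proj_exists[OF sR] by blast
  have XPV: "X *v (PV *v x) = X *v x" for x
  proof -
    define d where "d = x - PV *v x"
    have "y \<bullet> (X *v d) = 0" for y
    proof -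
      have v: "transpose X *v y \<in> V" by (simp add: V_def)
      have "y \<bullet> (X *v d) = (transpose X *v y) \<bullet> d" by (simp add: dot_lmul_matrix)
      also have "\<dots> = (transpose X *v y) \<bullet> x - (PV *v (transpose X *v y)) \<bullet> x"
        by (simp add: d_def inner_diff_right sym_inner[OF PV(1)])
      also have "\<dots> = 0" using PV(3)[OF v] by simp
      finally show ?thesis .
    qed
    then have "X *v d = 0" by (metis inner_eq_zero_iff)
    then show ?thesis by (simp add: d_def matrix_vector_mult_diff_distrib)
  qed
  have inj: "inj_on (\<lambda>x. X *v x) (span V)"
  proof (rule inj_onI)
    fix u v assume u: "u \<in> span V" and v: "v \<in> span V" and e: "X *v u = X *v v"
    have w: "u - v \<in> V" using span_diff[OF u v] sV by (metis span_eq_iff)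
    then obtain y where y: "u - v = transpose X *v y" by (auto simp: V_def)
    have "X *v (u - v) = 0" using e by (simp add: matrix_vector_mult_diff_distrib)
    then have "(u - v) \<bullet> (u - v) = 0" using y inner_transpose[of X y "u - v"] by simp
    then show "u = v" by simp
  qed
  obtain g where g: "linear g" "\<And>x. x \<in> span V \<Longrightarrow> g (X *v x) = x"
    using linear_inj_on_left_inverse[OF matrix_vector_mul_linear inj] by blast
  have gV: "g (X *v v) = v" if "v \<in> V" for v using g(2) that by (simp add: span_base)
  define h where "h y = g (PR *v y)" for y
  have lh: "linear h" unfolding h_def
    using linear_compose[OF matrix_vector_mul_linear g(1)] by (simp add: o_def)
  define G where "G = matrix h"
  have Gh0: "(\<lambda>x. matrix h *v x) = h" by (rule matrix_vector_mul(2)[OF lh])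
  have Gv: "G *v y = g (PR *v y)" for y
    unfolding G_def using fun_cong[OF Gh0, of y] by (simp add: h_def)
  have PRX: "PR *v (X *v x) = X *v x" for x using PR(3) by (simp add: R_def)
  have gX: "g (X *v x) = PV *v x" for x
    by (metis XPV PV(2) gV)
  have XgPR: "X *v g (PR *v y) = PR *v y" for y
  proof -
    obtain x where "PR *v y = X *v x" using PR(2)[of y] by (auto simp: R_def)
    then show ?thesis by (simp add: gX XPV)
  qed
  have PRPR: "PR *v (PR *v y) = PR *v y" for y using PR(2,3) by simp
  have e1: "X ** G ** X = X"
    by (simp add: matrix_eq matrix_vector_mul_assoc[symmetric] Gv PRX gX XPV)
  have e2: "G ** X ** G = G"
    by (simp add: matrix_eq matrix_vector_mul_assoc[symmetric] Gv XgPR PRPR)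
  have e3: "X ** G = PR"
    by (simp add: matrix_eq matrix_vector_mul_assoc[symmetric] Gv XgPR)
  have e4: "G ** X = PV"
    by (simp add: matrix_eq matrix_vector_mul_assoc[symmetric] Gv PRX gX)
  show ?thesis using e1 e2 e3 e4 PV(1) PR(1) by auto
qed

definition pen :: "real^'m^'n \<Rightarrow> real^'n^'m \<Rightarrow> bool" where
  "pen X G \<longleftrightarrow> X ** G ** X = X \<and> G ** X ** G = G \<and> transpose (X ** G) = X ** G
              \<and> transpose (G ** X) = G ** X"

lemma pen_unique:
  assumes p1: "pen X G1" and p2: "pen X G2"
  shows "G1 = G2"
proof -
  from p1 have a1: "X ** G1 ** X = X" and b1: "G1 ** X ** G1 = G1"
    and c1: "transpose (X ** G1) = X ** G1" and d1: "transpose (G1 ** X) = G1 ** X"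
    by (auto simp: pen_def)
  from p2 have a2: "X ** G2 ** X = X" and b2: "G2 ** X ** G2 = G2"
    and c2: "transpose (X ** G2) = X ** G2" and d2: "transpose (G2 ** X) = G2 ** X"
    by (auto simp: pen_def)
  have t1: "transpose X ** X ** G2 = transpose X"
  proof -
    have "transpose X = transpose (X ** G2 ** X)" using a2 by simp
    also have "\<dots> = transpose X ** transpose (X ** G2)" by (simp add: matrix_transpose_mul)
    also have "\<dots> = transpose X ** X ** G2" using c2 by (simp add: matrix_mul_assoc)
    finally show ?thesis by simp
  qed
  have t2: "G1 ** X ** transpose X = transpose X"
  proof -
    have "transpose X = transpose (X ** (G1 ** X))" using a1 by (simp add: matrix_mul_assoc)
    also have "\<dots> = transpose (G1 ** X) ** transpose X" by (simp add: matrix_transpose_mul)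
    also have "\<dots> = G1 ** X ** transpose X" using d1 by simp
    finally show ?thesis by simp
  qed
  have "G1 = G1 ** (X ** G1)" using b1 by (simp add: matrix_mul_assoc)
  also have "\<dots> = G1 ** transpose (X ** G1)" using c1 by simp
  also have "\<dots> = G1 ** transpose G1 ** transpose X" by (simp add: matrix_transpose_mul matrix_mul_assoc)
  also have "\<dots> = G1 ** transpose G1 ** (transpose X ** X ** G2)" using t1 by simp
  also have "\<dots> = G1 ** (transpose G1 ** transpose X) ** X ** G2" by (simp add: matrix_mul_assoc)
  also have "\<dots> = G1 ** transpose (X ** G1) ** X ** G2" by (simp add: matrix_transpose_mul)
  also have "\<dots> = G1 ** (X ** G1) ** X ** G2" using c1 by simp
  also have "\<dots> = G1 ** X ** G2" using b1 by (simp add: matrix_mul_assoc)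
  finally have g1: "G1 = G1 ** X ** G2" .
  have "G2 = (G2 ** X) ** G2" using b2 by simp
  also have "\<dots> = transpose (G2 ** X) ** G2" using d2 by simp
  also have "\<dots> = transpose X ** transpose G2 ** G2" by (simp add: matrix_transpose_mul)
  also have "\<dots> = (G1 ** X ** transpose X) ** transpose G2 ** G2" using t2 by simp
  also have "\<dots> = G1 ** X ** (transpose X ** transpose G2) ** G2" by (simp add: matrix_mul_assoc)
  also have "\<dots> = G1 ** X ** transpose (G2 ** X) ** G2" by (simp add: matrix_transpose_mul)
  also have "\<dots> = G1 ** X ** (G2 ** X ** G2)" using d2 by (simp add: matrix_mul_assoc)
  also have "\<dots> = G1 ** X ** G2" using b2 by simp
  finally show ?thesis using g1 by simp
qed

lemma mp_pen: "pen X (mp_inverse X)"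
proof -
  have ex: "\<exists>!G. pen X G"
    using mp_exists[of X] pen_unique by (auto simp: pen_def)
  show ?thesis unfolding mp_inverse_def using theI'[OF ex] by (simp add: pen_def)
qed

lemma mp_props:
  "X ** mp_inverse X ** X = X" "mp_inverse X ** X ** mp_inverse X = mp_inverse X"
  "transpose (X ** mp_inverse X) = X ** mp_inverse X"
  "transpose (mp_inverse X ** X) = mp_inverse X ** X"
  using mp_pen[of X] by (auto simp: pen_def)

lemma mp_sym:
  assumes "transpose S = S"
  shows "transpose (mp_inverse S) = mp_inverse S"
proof -
  let ?G = "mp_inverse S"
  have "pen S (transpose ?G)"
  proof -
    have 1: "S ** transpose ?G ** S = S"
      using arg_cong[OF mp_props(1)[of S], of transpose] assms
      by (simp add: matrix_transpose_mul matrix_mul_assoc)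
    have 2: "transpose ?G ** S ** transpose ?G = transpose ?G"
      using arg_cong[OF mp_props(2)[of S], of transpose] assms
      by (simp add: matrix_transpose_mul matrix_mul_assoc)
    have 3: "S ** transpose ?G = ?G ** S"
      using mp_props(4)[of S] assms by (simp add: matrix_transpose_mul)
    have 4: "transpose ?G ** S = S ** ?G"
      using mp_props(3)[of S] assms by (simp add: matrix_transpose_mul)
    show ?thesis unfolding pen_def using 1 2 3 4 mp_props(3,4)[of S] by simp
  qed
  then show ?thesis using pen_unique mp_pen by blast
qed

lemma gram_sym: "transpose (transpose X ** X) = transpose (X::real^'m^'n) ** X"
  by (simp add: matrix_transpose_mul)

lemma proj_sym: "transpose (proj X) = proj X"
  unfolding proj_def using mp_sym[OF gram_sym[of X]]
  by (simp add: matrix_transpose_mul matrix_mul_assoc)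

lemma inner_transpose2: "x \<bullet> (transpose E *v y) = ((E::real^'m^'n) *v x) \<bullet> y"
  by (metis dot_lmul_matrix vector_transpose_matrix)

lemma gram_inner: "x \<bullet> ((transpose E ** E) *v x) = ((E::real^'m^'n) *v x) \<bullet> (E *v x)"
  by (simp only: matrix_vector_mul_assoc[symmetric] inner_transpose2)

lemma zero_from_gram:
  fixes E :: "real^'m^'n"
  assumes "transpose E ** E = 0"
  shows "E = 0"
proof -
  have "E *v x = 0" for x
    using gram_inner[of x E] assms by simp
  then show ?thesis by (simp add: matrix_eq)
qed

lemma gram_nonneg: "nonneg_def (transpose E ** (E::real^'m^'n))"
  unfolding nonneg_def_def gram_inner by simp

lemma proj_X: "proj X ** X = (X::real^'m^'n)"
proof -
  define S where "S = transpose X ** X"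
  define G where "G = mp_inverse S"
  have SGS: "S ** G ** S = S" using mp_props(1) by (simp add: G_def)
  have pj: "proj X = X ** G ** transpose X" by (simp add: proj_def S_def G_def)
  have "X *v (G *v (S *v x)) = X *v x" for x
  proof -
    define d where "d = G *v (S *v x) - x"
    have Sd: "S *v d = 0"
      by (simp add: d_def matrix_vector_mult_diff_distrib matrix_vector_mul_assoc
          matrix_mul_assoc SGS)
    have "(X *v d) \<bullet> (X *v d) = d \<bullet> (S *v d)"
      using gram_inner[of d X] by (simp add: S_def)
    then have "X *v d = 0" using Sd by simp
    then show ?thesis by (simp add: d_def matrix_vector_mult_diff_distrib)
  qed
  then show ?thesis unfolding pj
    by (simp add: matrix_eq matrix_vector_mul_assoc[symmetric] S_def)
qed

lemma proj_idem: "proj X ** proj X = proj (X::real^'m^'n)"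
proof -
  define G where "G = mp_inverse (transpose X ** X)"
  have pj: "proj X = X ** G ** transpose X" by (simp add: proj_def G_def)
  have "proj X ** proj X = proj X ** (X ** G ** transpose X)" by (subst (2) pj) (rule refl)
  also have "\<dots> = (proj X ** X) ** G ** transpose X" by (simp only: matrix_mul_assoc)
  also have "\<dots> = proj X" by (simp only: proj_X pj[symmetric])
  finally show ?thesis .
qed

lemma proj_zero: "transpose X ** Z = 0 \<Longrightarrow> proj (X::real^'m^'n) ** Z = 0"
  unfolding proj_def by (metis matrix_mul_assoc times0_right)

lemma proj_zero_rev: "proj X ** Z = 0 \<Longrightarrow> transpose (X::real^'m^'n) ** Z = 0"
proof -
  assume a: "proj X ** Z = 0"
  have "transpose X = transpose (proj X ** X)" by (simp add: proj_X)
  also have "\<dots> = transpose X ** proj X" by (simp add: matrix_transpose_mul proj_sym)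
  finally have "transpose X ** Z = transpose X ** (proj X ** Z)" by (metis matrix_mul_assoc)
  then show ?thesis using a by simp
qed

lemma proj_range: "Y = X ** E \<Longrightarrow> proj X ** Y = (Y::real^'b^'n)"
  by (simp add: matrix_mul_assoc proj_X)

lemma proj_absorb: "proj X ** Y = Y \<Longrightarrow> proj X ** proj Y = proj (Y::real^'b^'n)"
  unfolding proj_def[of Y] by (metis matrix_mul_assoc)

lemma hcat_entries:
  "(transpose (hcat U V) ** Z) $ Inl a = (transpose U ** Z) $ a"
  "(transpose (hcat U V) ** Z) $ Inr b = (transpose V ** Z) $ b"
  by (simp_all add: matrix_matrix_mult_def transpose_def hcat_def vec_eq_iff)

lemma hcat_transpose_zero:
  "transpose (hcat U V) ** Z = 0 \<longleftrightarrow> transpose U ** Z = 0 \<and> transpose V ** Z = 0"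
proof
  assume a: "transpose (hcat U V) ** Z = 0"
  show "transpose U ** Z = 0 \<and> transpose V ** Z = 0"
  proof
    show "transpose U ** Z = 0"
    proof (subst vec_eq_iff, intro allI)
      fix a show "(transpose U ** Z) $ a = 0 $ a" using hcat_entries(1)[of U V Z a] a by simp
    qed
    show "transpose V ** Z = 0"
    proof (subst vec_eq_iff, intro allI)
      fix b show "(transpose V ** Z) $ b = 0 $ b" using hcat_entries(2)[of U V Z b] a by simp
    qed
  qed
next
  assume a: "transpose U ** Z = 0 \<and> transpose V ** Z = 0"
  show "transpose (hcat U V) ** Z = 0"
  proof (subst vec_eq_iff, intro allI)
    fix s show "(transpose (hcat U V) ** Z) $ s = 0 $ s"
      using a by (cases s) (simp_all add: hcat_entries)
  qed
qed

lemma hcat_sel: "hcat U V ** (\<chi> s j. if s = Inr j then 1 else 0) = V"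
proof -
  have "(\<Sum>s\<in>UNIV. hcat U V $ i $ s * (if s = Inr j then 1 else 0)) = V $ i $ j" for i j
  proof -
    have "(\<Sum>s\<in>UNIV. hcat U V $ i $ s * (if s = Inr j then 1 else 0))
        = (\<Sum>s\<in>UNIV. if s = Inr j then hcat U V $ i $ s else 0)"
      by (rule sum.cong) auto
    also have "\<dots> = hcat U V $ i $ Inr j" by simp
    finally show ?thesis by (simp add: hcat_def)
  qed
  then show ?thesis by (simp add: matrix_matrix_mult_def vec_eq_iff)
qed

theorem lemma2:
  fixes A :: "real^'p^'n" and B :: "real^'q^'n" and K :: "real^'k^'p"
  shows "loewner_le (C_Kalpha A B K)
           (mp_inverse (transpose K ** K) ** transpose K ** C_alpha A B ** K
              ** mp_inverse (transpose K ** K))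
         \<and> (C_Kalpha A B K =
              mp_inverse (transpose K ** K) ** transpose K ** C_alpha A B ** K
                ** mp_inverse (transpose K ** K)
            \<longleftrightarrow> C_alpha A B ** proj K = proj K ** C_alpha A B)"
proof -
  define G where "G = mp_inverse (transpose K ** K)"
  define Pk where "Pk = proj K"
  have Pk': "Pk = K ** G ** transpose K" by (simp add: Pk_def proj_def G_def)
  define M where "M = mat 1 - Pk"
  define X1 where "X1 = A ** K ** G"
  define X2 where "X2 = hcat (A ** M) B"
  define Pb where "Pb = proj B"
  define R where "R = proj X2"
  define C where "C = C_alpha A B"
  define Q where "Q = mat 1 - Pb"
  define D where "D = R - Pb"
  have C_eq: "C = transpose A ** Q ** A"
    by (simp add: C_def C_alpha_def info_mat_def proj_perp_def Q_def Pb_def)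
  have LHS: "C_Kalpha A B K = transpose X1 ** (mat 1 - R) ** X1"
    by (simp add: C_Kalpha_def Let_def info_mat_def proj_perp_def G_def X1_def X2_def
        M_def Pk' R_def)
  have Gs: "transpose G = G" unfolding G_def by (rule mp_sym[OF gram_sym])
  have X1t: "transpose X1 = G ** transpose K ** transpose A"
    by (simp add: X1_def matrix_transpose_mul Gs matrix_mul_assoc)
  have RHS: "G ** transpose K ** C ** K ** G = transpose X1 ** Q ** X1"
    unfolding X1t by (simp add: C_eq X1_def matrix_mul_assoc)
  have diff: "transpose X1 ** Q ** X1 - transpose X1 ** (mat 1 - R) ** X1
      = transpose X1 ** D ** X1"
    by (simp add: mm_sub_ldistrib mm_sub_rdistrib D_def Q_def)
  have RB: "R ** B = B" unfolding R_def X2_def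
    by (rule proj_range[OF hcat_sel[symmetric]])
  have RPb: "R ** Pb = Pb" unfolding Pb_def R_def by (rule proj_absorb[OF RB[unfolded R_def]])
  have Pbs: "transpose Pb = Pb" by (simp add: Pb_def proj_sym)
  have Rs: "transpose R = R" by (simp add: R_def proj_sym)
  have PbR: "Pb ** R = Pb"
    using arg_cong[OF RPb, of transpose] by (simp add: matrix_transpose_mul Pbs Rs)
  have RR: "R ** R = R" by (simp add: R_def proj_idem)
  have PbPb: "Pb ** Pb = Pb" by (simp add: Pb_def proj_idem)
  have Ds: "transpose D = D" by (simp add: D_def transpose_sub Pbs Rs)
  have DD: "D ** D = D"
    by (simp add: D_def mm_sub_ldistrib mm_sub_rdistrib RR RPb PbR PbPb)
  have XDX: "transpose X1 ** D ** X1 = transpose (D ** X1) ** (D ** X1)"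
  proof -
    have "transpose (D ** X1) ** (D ** X1) = transpose X1 ** (D ** D) ** X1"
      by (simp add: matrix_transpose_mul Ds matrix_mul_assoc)
    then show ?thesis by (simp add: DD)
  qed
  have main1: "loewner_le (C_Kalpha A B K) (G ** transpose K ** C ** K ** G)"
    unfolding loewner_le_def LHS RHS diff XDX by (rule gram_nonneg)
  have step1: "(C_Kalpha A B K = G ** transpose K ** C ** K ** G) \<longleftrightarrow> D ** X1 = 0"
  proof -
    have "(C_Kalpha A B K = G ** transpose K ** C ** K ** G)
        \<longleftrightarrow> G ** transpose K ** C ** K ** G - C_Kalpha A B K = 0" by (simp only: right_minus_eq) (rule eq_commute)
    also have "\<dots> \<longleftrightarrow> transpose (D ** X1) ** (D ** X1) = 0"
      unfolding LHS RHS diff XDX ..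
    also have "\<dots> \<longleftrightarrow> D ** X1 = 0"
      using zero_from_gram[of "D ** X1"] by (auto simp: transpose_zero)
    finally show ?thesis .
  qed
  have DX: "D ** X1 = R ** (Q ** X1)"
    by (simp add: D_def Q_def mm_sub_rdistrib mm_sub_ldistrib matrix_mul_assoc RPb)
  have BQ: "transpose B ** Q = 0"
  proof -
    have "transpose B ** Pb = transpose B"
      using arg_cong[OF proj_X[of B], of transpose] by (simp add: matrix_transpose_mul Pb_def proj_sym)
    then show ?thesis by (simp add: Q_def mm_sub_ldistrib)
  qed
  have Pks: "transpose Pk = Pk" by (simp add: Pk_def proj_sym)
  have Ms: "transpose M = M" by (simp add: M_def transpose_sub Pks)
  have step2: "D ** X1 = 0 \<longleftrightarrow> M ** C ** K ** G = 0"
  proof -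
    have "D ** X1 = 0 \<longleftrightarrow> transpose X2 ** (Q ** X1) = 0"
      unfolding DX R_def using proj_zero proj_zero_rev by blast
    also have "\<dots> \<longleftrightarrow> transpose (A ** M) ** (Q ** X1) = 0"
      unfolding X2_def hcat_transpose_zero using BQ by (simp add: matrix_mul_assoc)
    also have "transpose (A ** M) ** (Q ** X1) = M ** C ** K ** G"
      by (simp add: matrix_transpose_mul Ms C_eq X1_def matrix_mul_assoc)
    finally show ?thesis .
  qed
  have PkK: "Pk ** K = K" by (simp add: Pk_def proj_X)
  have step3: "M ** C ** K ** G = 0 \<longleftrightarrow> M ** C ** K = 0"
  proof
    assume a: "M ** C ** K ** G = 0"
    have "M ** C ** K = M ** C ** (Pk ** K)" by (simp add: PkK)
    also have "\<dots> = (M ** C ** K ** G) ** transpose K ** K" by (simp add: Pk' matrix_mul_assoc)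
    finally show "M ** C ** K = 0" using a by simp
  qed simp
  have Cs: "transpose C = C"
  proof -
    have "transpose Q = Q" by (simp add: Q_def transpose_sub Pbs)
    then show ?thesis by (simp add: C_eq matrix_transpose_mul matrix_mul_assoc)
  qed
  have MPk: "M ** Pk = 0" by (simp add: M_def mm_sub_rdistrib Pk_def proj_idem)
  have step4: "M ** C ** K = 0 \<longleftrightarrow> C ** Pk = Pk ** C"
  proof
    assume a: "M ** C ** K = 0"
    have "M ** C ** Pk = (M ** C ** K) ** G ** transpose K" by (simp add: Pk' matrix_mul_assoc)
    then have "M ** C ** Pk = 0" using a by simp
    then have e: "C ** Pk = Pk ** C ** Pk" by (simp add: M_def mm_sub_rdistrib)
    have "Pk ** C = transpose (C ** Pk)" by (simp add: matrix_transpose_mul Cs Pks)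
    also have "\<dots> = transpose (Pk ** C ** Pk)" using e by simp
    also have "\<dots> = Pk ** C ** Pk" by (simp add: matrix_transpose_mul Cs Pks matrix_mul_assoc)
    finally show "C ** Pk = Pk ** C" using e by simp
  next
    assume a: "C ** Pk = Pk ** C"
    have "M ** C ** K = M ** (C ** Pk) ** K" by (simp add: PkK matrix_mul_assoc[symmetric])
    also have "\<dots> = (M ** Pk) ** C ** K" using a by (simp add: matrix_mul_assoc)
    finally show "M ** C ** K = 0" by (simp add: MPk)
  qed
  have main2: "(C_Kalpha A B K = G ** transpose K ** C ** K ** G) \<longleftrightarrow> C ** Pk = Pk ** C"
    using step1 step2 step3 step4 by simp
  show ?thesis using main1 main2 unfolding G_def C_def Pk_def by simp
qed

end
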